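(* Let $\tau:\mathbb{F}_p((t))^d\to\mathbb{F}_p((t))^d$, $(f_1,\dots,f_d)\mapsto(tf_1,\dots,tf_d)$, and let $V$ be a compact open subgroup of $\mathbb{F}_p((t))^d$ such that $\tau(V)$ is a proper subgroup of $V$. Then there is an automorphism $\theta$ of the topological group $\mathbb{F}_p((t))^d$ such that $\theta\circ\tau=\tau\circ\theta$ and $\theta(\mathbb{F}_p[[t]]^d)=V$.
   Context: $\mathbb{F}_p((t))$ is the additive group of formal Laurent series over $\mathbb{F}_p$ with its usual locally compact topology, $\mathbb{F}_p[[t]]$ the compact open subgroup of power series; $\mathbb{F}_p((t))^d$ has the product topology. Automorphisms are of the additive topological group, not necessarily $\mathbb{F}_p((t))$-linear. *)

theory Defs
  imports "HOL-Analysis.Analysis" "HOL-Computational_Algebra.Formal_Laurent_Series"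
begin

text \<open>F_p((t)) is rendered as 'k fls for a finite field 'k of prime cardinality,
  with the library metric topology on fls (the t-adic topology); the d-fold power is
  'k fls ^ 'd with the product topology (vec instance).\<close>

definition tau_mult :: "('k::field fls) ^ 'd \<Rightarrow> ('k fls) ^ 'd" where
  "tau_mult x = (\<chi> i. fls_X * x $ i)"

definition fls_integers :: "'k::field fls set" where
  "fls_integers = {f. f = 0 \<or> 0 \<le> fls_subdegree f}"

definition add_subgroup :: "('a::ab_group_add) set \<Rightarrow> bool" where
  "add_subgroup H \<longleftrightarrow> 0 \<in> H \<and> (\<forall>x\<in>H. \<forall>y\<in>H. x + y \<in> H) \<and> (\<forall>x\<in>H. - x \<in> H)"

definition top_group_aut :: "('a::{ab_group_add,topological_space} \<Rightarrow> 'a) \<Rightarrow> bool" where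
  "top_group_aut \<theta> \<longleftrightarrow> (\<forall>x y. \<theta> (x + y) = \<theta> x + \<theta> y) \<and> (\<exists>\<theta>'. homeomorphism UNIV UNIV \<theta> \<theta>')"

end

theory Submission
  imports Defs "HOL-Number_Theory.Residues"
begin
unbundle fps_syntax

lemma prime_field_of_nat:
  assumes p: "prime CARD('k::{field,finite})"
  shows "\<exists>n. (a::'k) = of_nat n"
proof -
  have "CHAR('k) dvd CARD('k)" by (rule CHAR_dvd_CARD)
  moreover have "CHAR('k) \<noteq> 1" by simp
  ultimately have c: "CHAR('k) = CARD('k)" using p by (meson prime_nat_iff)
  have inj: "inj_on (of_nat :: nat \<Rightarrow> 'k) {..<CHAR('k)}"
    by (intro inj_onI) (auto simp: of_nat_eq_iff_cong_CHAR cong_def)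
  have "card ((of_nat :: nat \<Rightarrow> 'k) ` {..<CHAR('k)}) = CARD('k)"
    using card_image[OF inj] c by simp
  hence "(of_nat :: nat \<Rightarrow> 'k) ` {..<CHAR('k)} = UNIV"
    by (intro card_subset_eq) auto
  thus ?thesis by auto
qed

definition ino :: "int \<Rightarrow> 'k::field fls \<Rightarrow> bool" where
  "ino N f \<longleftrightarrow> f = 0 \<or> N \<le> fls_subdegree f"

lemma ino_iff: "ino N f \<longleftrightarrow> (\<forall>k<N. f $$ k = 0)"
proof
  assume "ino N f" then show "\<forall>k<N. f $$ k = 0"
    unfolding ino_def by auto
next
  assume h: "\<forall>k<N. f $$ k = 0"
  show "ino N f"
  proof (cases "f = 0")
    case False then show ?thesis using h fls_subdegree_geI[of f N] by (simp add: ino_def)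
  qed (simp add: ino_def)
qed

lemma ino_0 [simp]: "ino N 0" by (simp add: ino_def)
lemma ino_add: "ino N f \<Longrightarrow> ino N g \<Longrightarrow> ino N (f + g)" by (simp add: ino_iff)
lemma ino_diff: "ino N f \<Longrightarrow> ino N g \<Longrightarrow> ino N (f - g)" by (simp add: ino_iff)
lemma ino_uminus: "ino N f \<Longrightarrow> ino N (- f)" by (simp add: ino_iff)
lemma ino_mono: "ino N f \<Longrightarrow> M \<le> N \<Longrightarrow> ino M f" by (simp add: ino_iff)
lemma ino_mult:
  fixes f g :: "'k::field fls"
  shows "ino N f \<Longrightarrow> ino M g \<Longrightarrow> ino (N + M) (f * g)"
proof (cases "f = 0 \<or> g = 0")
  case False
  then have "fls_subdegree (f * g) = fls_subdegree f + fls_subdegree g"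
    by (intro fls_subdegree_mult) auto
  then show "ino N f \<Longrightarrow> ino M g \<Longrightarrow> ?thesis" using False unfolding ino_def by auto
qed auto
lemma ino_T:
  fixes f :: "'k::field fls"
  shows "ino N f \<Longrightarrow> ino (k + N) (fls_X_intpow k * f)"
proof (cases "f = 0")
  case False
  then have "fls_subdegree (fls_X_intpow k * f) = fls_subdegree f + k"
    by (rule fls_subdegree_mult_fls_X_intpow(1))
  then show "ino N f \<Longrightarrow> ?thesis" using False unfolding ino_def by auto
qed auto

lemma fls_integers_ino: "f \<in> fls_integers \<longleftrightarrow> ino 0 f"
  by (simp add: fls_integers_def ino_def)

lemma dist_fls_0: "dist (f::'k::field fls) g = dist (f - g) 0"
  by (simp add: dist_fls_def)

lemma dist_ino_le:
  assumes "ino (int N) f" shows "dist f 0 \<le> inverse (2 ^ N)"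
proof (cases "f = 0")
  case False
  then have "int N \<le> fls_subdegree f" using assms by (simp add: ino_def)
  then have "(2::real) ^ N \<le> 2 ^ nat (fls_subdegree f)"
    by (intro power_increasing) auto
  then show ?thesis using False \<open>int N \<le> fls_subdegree f\<close>
    by (simp add: dist_fls_def le_imp_inverse_le)
qed simp

lemma dist_lt_ino:
  assumes "dist f 0 < inverse (2 ^ N)" shows "ino (int N) f"
proof (cases "f = 0")
  case False
  show ?thesis
  proof (cases "0 \<le> fls_subdegree f")
    case True
    then have "inverse ((2::real) ^ nat (fls_subdegree f)) < inverse (2 ^ N)"
      using assms False by (simp add: dist_fls_def)
    then have "(2::real) ^ N < 2 ^ nat (fls_subdegree f)"
      by (simp add: inverse_less_iff_less)
    then have "N < nat (fls_subdegree f)" using power_less_imp_less_exp by fastforce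
    then show ?thesis using True unfolding ino_def by linarith
  next
    case F: False
    then have "(2::real) ^ nat (- fls_subdegree f) < inverse (2 ^ N)"
      using assms False by (simp add: dist_fls_def)
    moreover have "(1::real) \<le> 2 ^ nat (- fls_subdegree f)" by simp
    moreover have "inverse ((2::real) ^ N) \<le> 1" by (simp add: inverse_le_1_iff)
    ultimately show ?thesis by linarith
  qed
qed (simp add: ino_def)

lemma dist_bounded_ino:
  assumes "dist f 0 \<le> (2::real) ^ M" shows "ino (- int M) f"
proof (rule ccontr)
  assume "\<not> ino (- int M) f"
  then have f: "f \<noteq> 0" "fls_subdegree f < - int M" by (auto simp: ino_def)
  then have "dist f 0 = 2 ^ nat (- fls_subdegree f)" by (simp add: dist_fls_def)
  moreover have "(2::real) ^ M < 2 ^ nat (- fls_subdegree f)"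
    using f by (intro power_strict_increasing) auto
  ultimately show False using assms by simp
qed

definition smul :: "'k::field fls \<Rightarrow> ('k fls) ^ 'd \<Rightarrow> ('k fls) ^ 'd" where
  "smul c x = (\<chi> i. c * x $ i)"

definition Bl :: "int \<Rightarrow> (('k::field) fls ^ 'd) set" where
  "Bl N = {x. \<forall>i. ino N (x $ i)}"

lemma smul_nth [simp]: "smul c x $ i = c * x $ i" by (simp add: smul_def)
lemma smul_add: "smul c (x + y) = smul c x + smul c y" by (simp add: vec_eq_iff algebra_simps)
lemma smul_add2: "smul (c + d) x = smul c x + smul d x" by (simp add: vec_eq_iff algebra_simps)
lemma smul_diff: "smul c (x - y) = smul c x - smul c y" by (simp add: vec_eq_iff algebra_simps)
lemma smul_mult: "smul (c * d) x = smul c (smul d x)" by (simp add: vec_eq_iff algebra_simps)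
lemma smul_1 [simp]: "smul 1 x = x" by (simp add: vec_eq_iff)
lemma smul_0 [simp]: "smul 0 x = 0" by (simp add: vec_eq_iff)
lemma smul_zero [simp]: "smul c 0 = 0" by (simp add: vec_eq_iff)
lemma tau_smul: "tau_mult x = smul fls_X x" by (simp add: tau_mult_def smul_def)
lemma smul_sum: "smul c (\<Sum>i\<in>A. f i) = (\<Sum>i\<in>A. smul c (f i))"
  by (simp add: vec_eq_iff sum_distrib_left)

lemma Bl_T: "x \<in> Bl N \<Longrightarrow> smul (fls_X_intpow k) x \<in> Bl (k + N)"
  by (simp add: Bl_def ino_T)
lemma Bl_mono: "x \<in> Bl N \<Longrightarrow> M \<le> N \<Longrightarrow> x \<in> Bl M"
  by (auto simp: Bl_def intro: ino_mono)
lemma Bl_add: "x \<in> Bl N \<Longrightarrow> y \<in> Bl N \<Longrightarrow> x + y \<in> Bl N"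
  by (simp add: Bl_def ino_add)
lemma Bl_smul: "x \<in> Bl N \<Longrightarrow> ino M c \<Longrightarrow> smul c x \<in> Bl (M + N)"
  by (simp add: Bl_def ino_mult)

lemma T_mult: "fls_X_intpow a * fls_X_intpow b = (fls_X_intpow (a + b) :: 'k::field fls)"
  by (rule fls_X_intpow_times_fls_X_intpow)

lemma smul_T_cancel: "smul (fls_X_intpow (-s)) (smul (fls_X_intpow s) y) = (y :: 'k::field fls ^ 'd)"
proof -
  have "fls_X_intpow (-s) * fls_X_intpow s = (1::'k fls)" using T_mult[of "-s" s] by simp
  then show ?thesis by (metis smul_mult smul_1)
qed

lemma dist_Bl:
  fixes y z :: "('k::field fls) ^ 'd"
  assumes "y - z \<in> Bl (int N)"
  shows "dist y z \<le> real CARD('d) * inverse (2 ^ N)"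
proof -
  have "dist y z = L2_set (\<lambda>i. dist (y$i) (z$i)) UNIV" by (simp add: dist_vec_def)
  also have "\<dots> \<le> (\<Sum>i\<in>UNIV. dist (y$i) (z$i))" by (rule L2_set_le_sum) simp
  also have "\<dots> \<le> (\<Sum>i\<in>(UNIV::'d set). inverse (2 ^ N))"
  proof (rule sum_mono)
    fix i
    have "ino (int N) ((y - z) $ i)" using assms by (simp add: Bl_def)
    then have "dist ((y-z)$i) 0 \<le> inverse (2 ^ N)" by (rule dist_ino_le)
    then show "dist (y$i) (z$i) \<le> inverse (2 ^ N)" by (simp add: dist_fls_0[of "y$i"])
  qed
  also have "\<dots> = real CARD('d) * inverse (2 ^ N)" by simp
  finally show ?thesis .
qed

lemma exists_small: "0 < (e::real) \<Longrightarrow> \<exists>N. real CARD('d) * inverse (2 ^ N) < e"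
proof -
  assume e: "0 < e"
  obtain N where N: "real CARD('d) / e < 2 ^ N" using real_arch_pow[of 2] by auto
  have "real CARD('d) < e * 2 ^ N" using N e by (simp add: field_simps)
  then have "real CARD('d) * inverse (2 ^ N) < e" by (simp add: field_simps)
  then show ?thesis by blast
qed

lemma open_contains_Bl:
  fixes V :: "('k::field fls ^ 'd) set"
  assumes "open V" "0 \<in> V"
  shows "\<exists>N::nat. Bl (int N) \<subseteq> V"
proof -
  obtain e where e: "e > 0" "\<forall>y. dist y 0 < e \<longrightarrow> y \<in> V"
    using assms unfolding open_dist by blast
  obtain N where N: "real CARD('d) * inverse (2 ^ N) < e" using exists_small[OF e(1)] by blast
  have "Bl (int N) \<subseteq> V"
  proof
    fix y :: "'k fls ^ 'd" assume "y \<in> Bl (int N)"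
    then have "dist y 0 \<le> real CARD('d) * inverse (2 ^ N)" by (intro dist_Bl) simp
    then show "y \<in> V" using e N by simp
  qed
  then show ?thesis by blast
qed

lemma compact_in_Bl:
  fixes V :: "('k::field fls ^ 'd) set"
  assumes "compact V"
  shows "\<exists>M::nat. V \<subseteq> Bl (- int M)"
proof -
  have "bounded V" using assms by (rule compact_imp_bounded)
  then obtain a r where ar: "\<forall>y\<in>V. dist a y \<le> r" unfolding bounded_def by blast
  obtain M where M: "dist a 0 + r < 2 ^ M" using real_arch_pow[of 2] by auto
  have "V \<subseteq> Bl (- int M)"
  proof
    fix y assume y: "y \<in> V"
    have "dist y 0 \<le> dist a y + dist a 0" by (metis dist_commute dist_triangle)
    then have d: "dist y 0 \<le> 2 ^ M" using ar y M by force
    show "y \<in> Bl (- int M)" unfolding Bl_def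
    proof (intro CollectI allI)
      fix i
      have "dist (y $ i) (0 $ i) \<le> dist y 0" by (rule dist_vec_nth_le)
      then show "ino (- int M) (y $ i)" using d by (intro dist_bounded_ino) simp
    qed
  qed
  then show ?thesis by blast
qed

lemma cont_from_Bl:
  fixes L :: "('k::field fls ^ 'd) \<Rightarrow> ('k fls ^ 'd)"
  assumes add: "\<And>x y. L (x + y) = L x + L y"
    and B: "\<And>k x. x \<in> Bl k \<Longrightarrow> L x \<in> Bl (k - int M)"
  shows "continuous_on UNIV L"
proof -
  have diff: "L x - L y = L (x - y)" for x y
    using add[of y "x - y"] by (simp add: algebra_simps)
  show ?thesis unfolding continuous_on_iff
  proof (intro ballI allI impI)
    fix x :: "'k fls ^ 'd" and e :: real assume e: "0 < e"
    obtain N where N: "real CARD('d) * inverse (2 ^ N) < e" using exists_small[OF e] by blast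
    define d :: real where "d = inverse (2 ^ (N + M))"
    have "d > 0" by (simp add: d_def)
    moreover have "dist (L x') (L x) < e" if "dist x' x < d" for x'
    proof -
      have "x' - x \<in> Bl (int (N + M))" unfolding Bl_def
      proof (intro CollectI allI)
        fix i
        have "dist (x' $ i) (x $ i) < d" using dist_vec_nth_le[of x' i x] that by linarith
        then have "dist ((x' - x) $ i) 0 < inverse (2 ^ (N+M))"
          by (simp add: d_def dist_fls_0[of "x' $ i"])
        then show "ino (int (N + M)) ((x' - x) $ i)" by (rule dist_lt_ino)
      qed
      then have "L (x' - x) \<in> Bl (int N)" using B by fastforce
      then have "L x' - L x \<in> Bl (int N)" by (simp add: diff)
      then have "dist (L x') (L x) \<le> real CARD('d) * inverse (2 ^ N)" by (rule dist_Bl)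
      then show ?thesis using N by linarith
    qed
    ultimately show "\<exists>d>0. \<forall>x'\<in>UNIV. dist x' x < d \<longrightarrow> dist (L x') (L x) < e" by blast
  qed
qed

lemma mono_nth: "(fls_const (a::'k::field) * fls_X ^ m) $$ k = (if k = int m then a else 0)"
  by (simp add: fls_X_power_times_conv_shift(2) fls_times_fps_to_fls)

lemma V_sum_closed:
  fixes V :: "('a::ab_group_add) set"
  assumes "add_subgroup V" "finite A" "\<And>i. i \<in> A \<Longrightarrow> f i \<in> V"
  shows "sum f A \<in> V"
  using assms(2,3)
proof (induction A rule: finite_induct)
  case empty then show ?case using assms(1) by (simp add: add_subgroup_def)
next
  case (insert x F) then show ?case using assms(1) by (simp add: add_subgroup_def)
qed

context
  fixes V :: "('k::{field,finite} fls ^ 'd) set" and N0 M0 :: nat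
  assumes p: "prime CARD('k)" and sg: "add_subgroup V" and tauV: "tau_mult ` V \<subseteq> V"
    and N0: "Bl (int N0) \<subseteq> V" and M0: "V \<subseteq> Bl (- int M0)"
begin

lemma V0: "0 \<in> V" using sg by (simp add: add_subgroup_def)
lemma Vadd: "x \<in> V \<Longrightarrow> y \<in> V \<Longrightarrow> x + y \<in> V" using sg by (simp add: add_subgroup_def)
lemma Vminus: "x \<in> V \<Longrightarrow> - x \<in> V" using sg by (simp add: add_subgroup_def)
lemma Vdiff: "x \<in> V \<Longrightarrow> y \<in> V \<Longrightarrow> x - y \<in> V"
  using Vadd[of x "- y"] Vminus[of y] by simp

lemma V_of_nat: "w \<in> V \<Longrightarrow> smul (of_nat n) w \<in> V"
proof (induction n)
  case 0 then show ?case by (simp add: V0)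
next
  case (Suc n)
  have "smul (of_nat (Suc n)) w = w + smul (of_nat n) w" by (simp add: smul_add2)
  then show ?case using Suc Vadd by simp
qed

lemma V_const: "w \<in> V \<Longrightarrow> smul (fls_const a) w \<in> V"
proof -
  assume w: "w \<in> V"
  obtain n where "a = of_nat n" using prime_field_of_nat[OF p] by blast
  then have "fls_const a = of_nat n" by (simp add: fls_of_nat)
  then show ?thesis using V_of_nat[OF w] by simp
qed

lemma V_Xpow: "w \<in> V \<Longrightarrow> smul (fls_X ^ m) w \<in> V"
proof (induction m)
  case 0 then show ?case by simp
next
  case (Suc m)
  have "smul (fls_X ^ Suc m) w = tau_mult (smul (fls_X ^ m) w)"
    by (simp add: tau_smul smul_mult[symmetric])
  then show ?case using Suc tauV by auto
qed

lemma V_module: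
  assumes c: "ino 0 c" and v: "v \<in> V"
  shows "smul c v \<in> V"
proof -
  define K where "K = int N0 + int M0"
  have vB: "v \<in> Bl (- int M0)" using v M0 by blast
  have P: "\<forall>c::'k fls. ino 0 c \<longrightarrow> ino (K - int n) c \<longrightarrow> smul c v \<in> V" for n
  proof (induction n)
    case 0
    show ?case
    proof (intro allI impI)
      fix c :: "'k fls" assume "ino 0 c" "ino (K - int 0) c"
      then have "smul c v \<in> Bl (K + - int M0)" using Bl_smul[OF vB] by auto
      then show "smul c v \<in> V" using N0 unfolding K_def by auto
    qed
  next
    case (Suc n)
    show ?case
    proof (intro allI impI)
      fix c :: "'k fls" assume c0: "ino 0 c" and cK: "ino (K - int (Suc n)) c"
      define j where "j = K - int n - 1"
      show "smul c v \<in> V"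
      proof (cases "j < 0")
        case True
        then have "ino (K - int n) c" using c0 ino_mono[of 0 c] unfolding j_def by simp
        then show ?thesis using Suc c0 by blast
      next
        case False
        define a where "a = c $$ j"
        define m where "m = fls_const a * fls_X ^ nat j"
        define c' where "c' = c - m"
        have m_nth: "m $$ k = (if k = j then a else 0)" for k
          using False by (simp add: m_def mono_nth)
        have "ino (K - int n) c'" unfolding ino_iff
        proof (intro allI impI)
          fix k assume k: "k < K - int n"
          show "c' $$ k = 0"
          proof (cases "k = j")
            case True then show ?thesis by (simp add: c'_def m_nth a_def)
          next
            case F: False
            then have "k < K - int (Suc n)" using k j_def by simp
            then have "c $$ k = 0" using cK by (simp add: ino_iff)
            then show ?thesis using F by (simp add: c'_def m_nth)
          qed
        qed
        moreover have "ino 0 m" using False by (simp add: ino_iff m_nth)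
        then have "ino 0 c'" using c0 by (simp add: c'_def ino_diff)
        ultimately have "smul c' v \<in> V" using Suc by blast
        moreover have "smul m v \<in> V"
          unfolding m_def smul_mult using V_const V_Xpow v by blast
        moreover have "c = c' + m" by (simp add: c'_def)
        ultimately show ?thesis by (simp add: smul_add2 Vadd)
      qed
    qed
  qed
  have "K \<ge> 0" by (simp add: K_def)
  then have "K - int (nat K) = 0" by simp
  then show ?thesis using P[of "nat K"] c by simp
qed


lemma exists_basis:
  "\<exists>vv::'d \<Rightarrow> ('k fls ^ 'd). \<exists>e::'d \<Rightarrow> nat. inj e \<and> (\<forall>i. vv i \<in> V \<and> vv i $ i \<noteq> 0 \<and>
     (\<forall>k. e k > e i \<longrightarrow> vv i $ k = 0) \<and>
     (\<forall>x\<in>V. (\<forall>k. e k > e i \<longrightarrow> x $ k = 0) \<longrightarrow> x $ i \<noteq> 0 \<longrightarrow>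
        fls_subdegree (vv i $ i) \<le> fls_subdegree (x $ i)))"
proof -
  obtain e :: "'d \<Rightarrow> nat" and n0 where "e ` UNIV = {i. i < n0}" "inj e"
    using finite_imp_inj_to_nat_seg[of "UNIV :: 'd set"] by auto
  have "\<forall>i. \<exists>v. v \<in> V \<and> v $ i \<noteq> 0 \<and>
     (\<forall>k. e k > e i \<longrightarrow> v $ k = 0) \<and>
     (\<forall>x\<in>V. (\<forall>k. e k > e i \<longrightarrow> x $ k = 0) \<longrightarrow> x $ i \<noteq> 0 \<longrightarrow>
        fls_subdegree (v $ i) \<le> fls_subdegree (x $ i))"
  proof
    fix i
    define P where "P x \<longleftrightarrow> x \<in> V \<and> (\<forall>k. e k > e i \<longrightarrow> x $ k = 0) \<and> x $ i \<noteq> 0" for x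
    have lb: "fls_subdegree (x $ i) + int M0 \<ge> 0" if "P x" for x
    proof -
      have "x \<in> Bl (- int M0)" using that M0 by (auto simp: P_def)
      then have "ino (- int M0) (x $ i)" by (simp add: Bl_def)
      then show ?thesis using that by (auto simp: P_def ino_def)
    qed
    define u :: "'k fls ^ 'd" where "u = (\<chi> k. if k = i then fls_X_intpow (int N0) else 0)"
    have "u \<in> Bl (int N0)" by (simp add: u_def Bl_def ino_def)
    then have "P u" using N0 by (auto simp: P_def u_def)
    then have ex: "\<exists>n x. P x \<and> fls_subdegree (x $ i) + int M0 = int n"
      using lb[of u] by (intro exI[of _ "nat (fls_subdegree (u $ i) + int M0)"]) auto
    define m where "m = (LEAST n. \<exists>x. P x \<and> fls_subdegree (x $ i) + int M0 = int n)"
    obtain v where v: "P v" "fls_subdegree (v $ i) + int M0 = int m"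
      using LeastI_ex[OF ex] unfolding m_def by blast
    have "fls_subdegree (v $ i) \<le> fls_subdegree (x $ i)" if "P x" for x
    proof -
      have "\<exists>y. P y \<and> fls_subdegree (y $ i) + int M0 = int (nat (fls_subdegree (x $ i) + int M0))"
        using that lb[OF that] by auto
      then have "m \<le> nat (fls_subdegree (x $ i) + int M0)" unfolding m_def by (rule Least_le)
      then show ?thesis using v(2) lb[OF that] by linarith
    qed
    then show "\<exists>v. v \<in> V \<and> v $ i \<noteq> 0 \<and>
     (\<forall>k. e k > e i \<longrightarrow> v $ k = 0) \<and>
     (\<forall>x\<in>V. (\<forall>k. e k > e i \<longrightarrow> x $ k = 0) \<longrightarrow> x $ i \<noteq> 0 \<longrightarrow>
        fls_subdegree (v $ i) \<le> fls_subdegree (x $ i))"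
      using v(1) unfolding P_def by (intro exI[of _ v]) auto
  qed
  then obtain vv where "\<forall>i. vv i \<in> V \<and> vv i $ i \<noteq> 0 \<and>
     (\<forall>k. e k > e i \<longrightarrow> vv i $ k = 0) \<and>
     (\<forall>x\<in>V. (\<forall>k. e k > e i \<longrightarrow> x $ k = 0) \<longrightarrow> x $ i \<noteq> 0 \<longrightarrow>
        fls_subdegree (vv i $ i) \<le> fls_subdegree (x $ i))"
    by metis
  then show ?thesis using \<open>inj e\<close> by blast
qed


lemma main_ctx:
  "\<exists>\<theta>. top_group_aut \<theta> \<and> \<theta> \<circ> tau_mult = tau_mult \<circ> \<theta> \<and> \<theta> ` Bl 0 = V"
proof -
  obtain vv :: "'d \<Rightarrow> ('k fls ^ 'd)" and e :: "'d \<Rightarrow> nat" where e: "inj e"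
    and vv: "\<And>i. vv i \<in> V" "\<And>i. vv i $ i \<noteq> 0"
      "\<And>i k. e k > e i \<Longrightarrow> vv i $ k = 0"
      "\<And>i x. x \<in> V \<Longrightarrow> (\<forall>k. e k > e i \<longrightarrow> x $ k = 0) \<Longrightarrow> x $ i \<noteq> 0 \<Longrightarrow>
        fls_subdegree (vv i $ i) \<le> fls_subdegree (x $ i)"
    using exists_basis by metis
  define th where "th x = (\<Sum>i\<in>UNIV. smul (x $ i) (vv i))" for x :: "'k fls ^ 'd"
  have th_add: "th (x + y) = th x + th y" for x y
    by (simp add: th_def smul_add2 sum.distrib)
  have th_smul: "th (smul c x) = smul c (th x)" for c x
    by (simp add: th_def smul_sum smul_mult)
  have th_0: "th 0 = 0" by (simp add: th_def)
  have th_diff: "th (x - y) = th x - th y" for x y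
    using th_add[of y "x - y"] by (simp add: algebra_simps)
  have th_unit: "th (\<chi> k. if k = i then c else 0) = smul c (vv i)" for i c
  proof -
    have eq: "(\<lambda>j. smul (if j = i then c else 0) (vv j)) = (\<lambda>j. if j = i then smul c (vv i) else 0)"
      by auto
    show ?thesis unfolding th_def vec_lambda_beta eq by simp
  qed
  have A: "th x \<in> V" if "x \<in> Bl 0" for x
    unfolding th_def
  proof (rule V_sum_closed[OF sg])
    fix i
    have "ino 0 (x $ i)" using that by (simp add: Bl_def)
    then show "smul (x $ i) (vv i) \<in> V" using V_module vv(1) by blast
  qed simp
  have B: "\<forall>y\<in>V. (\<forall>k. e k \<ge> n \<longrightarrow> y $ k = 0) \<longrightarrow> (\<exists>w\<in>Bl 0. th w = y)" for n
  proof (induction n)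
    case 0
    show ?case
    proof (intro ballI impI)
      fix y :: "'k fls ^ 'd" assume "\<forall>k. e k \<ge> 0 \<longrightarrow> y $ k = 0"
      then have "y = 0" by (simp add: vec_eq_iff)
      moreover have "(0::'k fls ^ 'd) \<in> Bl 0" by (simp add: Bl_def)
      ultimately show "\<exists>w\<in>Bl 0. th w = y" using th_0 by blast
    qed
  next
    case (Suc n)
    show ?case
    proof (intro ballI impI)
      fix y :: "'k fls ^ 'd" assume y: "y \<in> V" and yz: "\<forall>k. e k \<ge> Suc n \<longrightarrow> y $ k = 0"
      show "\<exists>w\<in>Bl 0. th w = y"
      proof (cases "\<exists>i. e i = n \<and> y $ i \<noteq> 0")
        case False
        then have "\<forall>k. e k \<ge> n \<longrightarrow> y $ k = 0" using yz
          by (metis Suc_leI le_neq_implies_less)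
        then show ?thesis using Suc y by blast
      next
        case True
        then obtain i where i: "e i = n" "y $ i \<noteq> 0" by blast
        have S: "\<forall>k. e k > e i \<longrightarrow> y $ k = 0" using yz i by auto
        define c where "c = y $ i / vv i $ i"
        have cv: "c * vv i $ i = y $ i" using vv(2)[of i] by (simp add: c_def)
        have "c \<noteq> 0" using cv i by auto
        then have "fls_subdegree (y $ i) = fls_subdegree c + fls_subdegree (vv i $ i)"
          using cv[symmetric] vv(2)[of i] by (simp add: fls_subdegree_mult)
        moreover have "fls_subdegree (vv i $ i) \<le> fls_subdegree (y $ i)"
          using vv(4)[OF y S i(2)] .
        ultimately have c0: "ino 0 c" by (simp add: ino_def)
        define y' where "y' = y - smul c (vv i)"
        have y'V: "y' \<in> V" unfolding y'_def using Vdiff y V_module[OF c0 vv(1)] by blast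
        have "\<forall>k. e k \<ge> n \<longrightarrow> y' $ k = 0"
        proof (intro allI impI)
          fix k assume k: "e k \<ge> n"
          show "y' $ k = 0"
          proof (cases "k = i")
            case True then show ?thesis by (simp add: y'_def cv)
          next
            case False
            then have "e k \<noteq> e i" using e by (auto simp: inj_def)
            then have "e k > e i" using k i by simp
            then show ?thesis using S vv(3)[of i k] by (simp add: y'_def)
          qed
        qed
        then obtain w where w: "w \<in> Bl 0" "th w = y'" using Suc y'V by blast
        define w' where "w' = w + (\<chi> k. if k = i then c else 0)"
        have "(\<chi> k. if k = i then c else 0) \<in> Bl 0" using c0 by (simp add: Bl_def)
        then have "w' \<in> Bl 0" using w(1) by (simp add: w'_def Bl_add)
        moreover have "th w' = y" by (simp add: w'_def th_add th_unit w(2) y'_def)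
        ultimately show ?thesis by blast
      qed
    qed
  qed
  have VB: "\<exists>w\<in>Bl 0. th w = y" if y: "y \<in> V" for y
  proof -
    have le: "e k \<le> Max (range e)" for k by (rule Max_ge) auto
    have "\<forall>k. e k \<ge> Suc (Max (range e)) \<longrightarrow> y $ k = 0"
      using le by (metis Suc_n_not_le_n le_trans)
    then show ?thesis using B y by blast
  qed
  have img: "th ` Bl 0 = V" using A VB by blast
  have C: "x = 0" if "th x = 0" for x
  proof (rule ccontr)
    assume "x \<noteq> 0"
    define Z where "Z = {i. x $ i \<noteq> 0}"
    have "Z \<noteq> {}" using \<open>x \<noteq> 0\<close> by (auto simp: Z_def vec_eq_iff)
    then obtain i where iZ: "i \<in> Z" and imax: "\<And>j. j \<in> Z \<Longrightarrow> e j \<le> e i"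
      using Max_in[of "e ` Z"] Max_ge[of "e ` Z"] by fastforce
    have "th x $ i = (\<Sum>j\<in>UNIV. x $ j * vv j $ i)" by (simp add: th_def)
    also have "\<dots> = (\<Sum>j\<in>UNIV. if j = i then x $ i * vv i $ i else 0)"
    proof (rule sum.cong)
      fix j assume "j \<in> (UNIV::'d set)"
      show "x $ j * vv j $ i = (if j = i then x $ i * vv i $ i else 0)"
      proof (cases "j = i \<or> x $ j = 0")
        case False
        then have "j \<in> Z" "j \<noteq> i" by (auto simp: Z_def)
        then have "e j < e i" using imax e by (metis inj_eq le_neq_implies_less)
        then show ?thesis using vv(3)[of j i] False by simp
      qed auto
    qed simp
    also have "\<dots> = x $ i * vv i $ i" by simp
    finally have "th x $ i \<noteq> 0" using iZ vv(2)[of i] by (simp add: Z_def)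
    then show False using that by simp
  qed
  have inj: "inj th"
  proof (rule injI)
    fix x y assume "th x = th y"
    then have "th (x - y) = 0" by (simp add: th_diff)
    then have "x - y = 0" by (rule C)
    then show "x = y" by simp
  qed
  have surj: "surj th"
  proof -
    have "y \<in> range th" for y
    proof -
      define s where "s = int N0 + (\<Sum>i\<in>UNIV. \<bar>fls_subdegree (y $ i)\<bar>)"
      have "smul (fls_X_intpow s) y \<in> Bl (int N0)" unfolding Bl_def
      proof (intro CollectI allI)
        fix i
        have "\<bar>fls_subdegree (y $ i)\<bar> \<le> (\<Sum>i\<in>UNIV. \<bar>fls_subdegree (y $ i)\<bar>)"
          by (rule member_le_sum) auto
        have "ino (- \<bar>fls_subdegree (y $ i)\<bar>) (y $ i)" unfolding ino_def by linarith
        then have "ino (s + - \<bar>fls_subdegree (y $ i)\<bar>) (fls_X_intpow s * y $ i)" by (rule ino_T)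
        moreover have "int N0 \<le> s + - \<bar>fls_subdegree (y $ i)\<bar>"
          using \<open>\<bar>fls_subdegree (y $ i)\<bar> \<le> _\<close> by (simp add: s_def)
        ultimately have "ino (int N0) (fls_X_intpow s * y $ i)" by (rule ino_mono)
        then show "ino (int N0) (smul (fls_X_intpow s) y $ i)" by simp
      qed
      then have "smul (fls_X_intpow s) y \<in> V" using N0 by blast
      then obtain w where "th w = smul (fls_X_intpow s) y" using VB by blast
      then have "th (smul (fls_X_intpow (-s)) w) = smul (fls_X_intpow (-s)) (smul (fls_X_intpow s) y)"
        by (simp only: th_smul)
      also have "\<dots> = y" by (rule smul_T_cancel)
      finally have "th (smul (fls_X_intpow (-s)) w) = y" .
      then show ?thesis by (metis rangeI)
    qed
    then show ?thesis by blast
  qed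
  define th' where "th' = inv_into UNIV th"
  have th_th': "th (th' y) = y" for y by (simp add: th'_def surj surj_f_inv_f)
  have th'_th: "th' (th x) = x" for x by (simp add: th'_def inj inv_f_f)
  have th'_add: "th' (x + y) = th' x + th' y" for x y
  proof -
    have "th (th' x + th' y) = x + y" by (simp add: th_add th_th')
    then show ?thesis using th'_th by metis
  qed
  have th'_smul: "th' (smul c x) = smul c (th' x)" for c x
  proof -
    have "th (smul c (th' x)) = smul c x" by (simp add: th_smul th_th')
    then show ?thesis using th'_th by metis
  qed
  have cont1: "continuous_on UNIV th"
  proof (rule cont_from_Bl[of th M0])
    fix k and x :: "'k fls ^ 'd" assume x: "x \<in> Bl k"
    define x0 where "x0 = smul (fls_X_intpow (-k)) x"
    have "x0 \<in> Bl (-k + k)" unfolding x0_def by (rule Bl_T[OF x])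
    then have "th x0 \<in> V" using A by simp
    then have "th x0 \<in> Bl (- int M0)" using M0 by blast
    then have "smul (fls_X_intpow k) (th x0) \<in> Bl (k + - int M0)" by (rule Bl_T)
    moreover have "smul (fls_X_intpow k) x0 = x" using smul_T_cancel[of "-k" x] by (simp add: x0_def)
    then have "th x = smul (fls_X_intpow k) (th x0)" using th_smul by metis
    ultimately show "th x \<in> Bl (k - int M0)" by simp
  qed (rule th_add)
  have cont2: "continuous_on UNIV th'"
  proof (rule cont_from_Bl[of th' N0])
    fix k and y :: "'k fls ^ 'd" assume y: "y \<in> Bl k"
    define y0 where "y0 = smul (fls_X_intpow (int N0 - k)) y"
    have "y0 \<in> Bl (int N0 - k + k)" unfolding y0_def by (rule Bl_T[OF y])
    then have "y0 \<in> V" using N0 by auto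
    then obtain w where w: "w \<in> Bl 0" "th w = y0" using VB by blast
    then have "th' y0 = w" using th'_th by metis
    have "smul (fls_X_intpow (k - int N0)) w \<in> Bl (k - int N0 + 0)" by (rule Bl_T[OF w(1)])
    moreover have "smul (fls_X_intpow (k - int N0)) y0 = y"
      using smul_T_cancel[of "int N0 - k" y] by (simp add: y0_def)
    then have "th' y = smul (fls_X_intpow (k - int N0)) w"
      using th'_smul[of "fls_X_intpow (k - int N0)" y0] \<open>th' y0 = w\<close> by simp
    ultimately show "th' y \<in> Bl (k - int N0)" by simp
  qed (rule th'_add)
  have "homeomorphism UNIV UNIV th th'"
    unfolding homeomorphism_def
  proof (intro conjI ballI)
    show "th ` UNIV = UNIV" using surj by simp
    show "th' ` UNIV = UNIV" using th'_th by (metis surjI)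
  qed (use cont1 cont2 th_th' th'_th in auto)
  then have "top_group_aut th" unfolding top_group_aut_def using th_add by blast
  moreover have "th \<circ> tau_mult = tau_mult \<circ> th" by (simp add: fun_eq_iff tau_smul th_smul)
  ultimately show ?thesis using img by blast
qed

end


theorem mainTheorem10:
  fixes V :: "(('k::{field,finite}) fls ^ 'd) set"
  assumes "prime CARD('k)"
    and "add_subgroup V" and "compact V" and "open V"
    and "tau_mult ` V \<subset> V"
  shows "\<exists>\<theta>. top_group_aut \<theta> \<and> \<theta> \<circ> tau_mult = tau_mult \<circ> \<theta>
            \<and> \<theta> ` {x. \<forall>i. x $ i \<in> fls_integers} = V"
proof -
  have "0 \<in> V" using assms(2) by (simp add: add_subgroup_def)
  then obtain N0 where N0: "Bl (int N0) \<subseteq> V" using open_contains_Bl[OF assms(4)] by blast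
  obtain M0 where M0: "V \<subseteq> Bl (- int M0)" using compact_in_Bl[OF assms(3)] by blast
  have tV: "tau_mult ` V \<subseteq> V" using assms(5) by blast
  have eq: "{x. \<forall>i. x $ i \<in> fls_integers} = (Bl 0 :: ('k fls ^ 'd) set)"
    by (simp add: Bl_def fls_integers_ino)
  show ?thesis using main_ctx[OF assms(1,2) tV N0 M0] unfolding eq .
qed

end
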